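(* Let $G=(V,E)$ be a finite hypergraph, each hyperedge $e\in E$ having vertex set $N(e)\subseteq V$, let $B\subseteq V$ be a set of boundary vertices, and let $\mathcal{D}$ be a finite set. For each $e\in E$ let $R^e=\{(\delta_x^e,U_x^e,O_x^e)\}_{x\in\mathcal{D}}$ be a hyperedge problem on $N(e)$, with $O_x^e$ acting on $\mathcal{H}^e$. For $v\in V$ write $\delta_x(v)=\sum_{e\in E:\,v\in N(e)}\delta_x^e(v)$. Assume (i) $\delta_x(v)=0$ for all $v\in V\setminus B$ and all $x$, and (ii) there are functions $U_x:V\to\mathbb{C}$ with $U_x^e=U_x|_{N(e)}$ for all $e\in E$, $x\in\mathcal{D}$. For each $e$ let $w^e=\{|(w^e)_x^\pm\rangle\}_{x\in\mathcal{D}}\subseteq\mathcal{H}^e\otimes\mathcal{W}^e$ be a feasible solution to $R^e$, and set $|w_x^\pm\rangle=\bigoplus_{e\in E}|(w^e)_x^\pm\rangle$. Then $w=\{|w_x^\pm\rangle\}_{x\in\mathcal{D}}$ is a feasible solution of the problem $R=\{(\delta_x|_B,\ U_x|_B,\ \bigoplus_{e\in E}O_x^e)\}_{x\in\mathcal{D}}$ on the vertex set $B$, and $\mathsf{R}_x^\pm(w)=\sum_{e\in E}\mathsf{R}_x^\pm(w^e)$ for all $x\in\mathcal{D}$.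
   Context: A state-reflection problem $\{(|\sigma_x^+\rangle,|\sigma_x^-\rangle,O_x)\}_{x\in\mathcal{D}}$ consists of orthogonal vectors $|\sigma_x^\pm\rangle$ in a finite-dimensional space $\mathcal{V}$ and operators $O_x$ on $\mathcal{H}$ with $O_x^2=I$; a feasible solution is a finite-dimensional space $\mathcal{W}$ and vectors $|w_x^s\rangle\in\mathcal{H}\otimes\mathcal{W}$ ($s\in\{+,-\}$) with $\langle\sigma_x^s|\sigma_y^t\rangle-st\langle\sigma_x^s|\sigma_y^t\rangle=\langle w_x^s|((I-O_x^\dagger O_y)\otimes I)|w_y^t\rangle$ for all $x,y\in\mathcal{D}$, $s,t\in\{+,-\}$; its witness sizes are $\mathsf{R}_x^\pm(w)=\||w_x^\pm\rangle\|^2$. A hyperedge problem on a finite set $V'$, written $\{(\delta_x,U_x,O_x)\}_x$, is a state-reflection problem over $\mathbb{C}^{V'}$ with $|\sigma_x^+\rangle=\delta_x$, $|\sigma_x^-\rangle=U_x$, where $\sum_{v}(\delta_x)_v=0$ and $U_x$ is constant on the support of $\delta_x$. The direct sum of the oracles acts on $\bigoplus_e(\mathcal{H}^e\otimes\mathcal{W}^e)$ as $\bigoplus_e(O_x^e\otimes I_{\mathcal{W}^e})$. *)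

theory Defs
  imports Complex_Main
begin

text \<open>Finite-dimensional spaces are modelled by finite index sets (orthonormal bases):
  a vector in C^I is a function I => complex (only values on I matter), an operator on C^I
  is a matrix I => I => complex, and H (x) W has basis I x J. Signs s in {+,-} are booleans
  (True = +).\<close>

definition sg :: "bool \<Rightarrow> complex" where
  "sg s = (if s then 1 else -1)"

definition vinner :: "'i set \<Rightarrow> ('i \<Rightarrow> complex) \<Rightarrow> ('i \<Rightarrow> complex) \<Rightarrow> complex" where
  "vinner I a b = (\<Sum>i\<in>I. cnj (a i) * b i)"

definition adj_mult :: "'h set \<Rightarrow> ('h \<Rightarrow> 'h \<Rightarrow> complex) \<Rightarrow> ('h \<Rightarrow> 'h \<Rightarrow> complex) \<Rightarrow> 'h \<Rightarrow> 'h \<Rightarrow> complex" where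
  "adj_mult HI A C = (\<lambda>i k. \<Sum>j\<in>HI. cnj (A j i) * C j k)"

definition tensor_id_apply :: "'h set \<Rightarrow> ('h \<Rightarrow> 'h \<Rightarrow> complex) \<Rightarrow> ('h \<times> 'w \<Rightarrow> complex) \<Rightarrow> 'h \<times> 'w \<Rightarrow> complex" where
  "tensor_id_apply HI A v = (\<lambda>(i, a). \<Sum>k\<in>HI. A i k * v (k, a))"

definition state_reflection_problem ::
  "'v set \<Rightarrow> 'h set \<Rightarrow> 'x set \<Rightarrow> (bool \<Rightarrow> 'x \<Rightarrow> 'v \<Rightarrow> complex) \<Rightarrow> ('x \<Rightarrow> 'h \<Rightarrow> 'h \<Rightarrow> complex) \<Rightarrow> bool" where
  "state_reflection_problem V' HI D \<sigma> Or \<longleftrightarrow>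
     finite V' \<and> finite HI \<and>
     (\<forall>x\<in>D. vinner V' (\<sigma> True x) (\<sigma> False x) = 0) \<and>
     (\<forall>x\<in>D. \<forall>i\<in>HI. \<forall>k\<in>HI. (\<Sum>j\<in>HI. Or x i j * Or x j k) = (if i = k then 1 else 0))"

definition feasible_solution ::
  "'v set \<Rightarrow> 'h set \<Rightarrow> 'x set \<Rightarrow> (bool \<Rightarrow> 'x \<Rightarrow> 'v \<Rightarrow> complex) \<Rightarrow> ('x \<Rightarrow> 'h \<Rightarrow> 'h \<Rightarrow> complex)
    \<Rightarrow> 'w set \<Rightarrow> (bool \<Rightarrow> 'x \<Rightarrow> 'h \<times> 'w \<Rightarrow> complex) \<Rightarrow> bool" where
  "feasible_solution V' HI D \<sigma> Or WI w \<longleftrightarrow>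
     finite WI \<and>
     (\<forall>x\<in>D. \<forall>y\<in>D. \<forall>s t.
        vinner V' (\<sigma> s x) (\<sigma> t y) - sg s * sg t * vinner V' (\<sigma> s x) (\<sigma> t y)
        = vinner (HI \<times> WI) (w s x)
            (\<lambda>p. tensor_id_apply HI (\<lambda>i k. (if i = k then 1 else 0) - adj_mult HI (Or x) (Or y) i k) (w t y) p))"

definition wsize :: "'h set \<Rightarrow> 'w set \<Rightarrow> ('h \<times> 'w \<Rightarrow> complex) \<Rightarrow> real" where
  "wsize HI WI v = (\<Sum>p\<in>HI \<times> WI. (cmod (v p))\<^sup>2)"

definition hyperedge_problem ::
  "'v set \<Rightarrow> 'h set \<Rightarrow> 'x set \<Rightarrow> ('x \<Rightarrow> 'v \<Rightarrow> complex) \<Rightarrow> ('x \<Rightarrow> 'v \<Rightarrow> complex) \<Rightarrow> ('x \<Rightarrow> 'h \<Rightarrow> 'h \<Rightarrow> complex) \<Rightarrow> bool" where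
  "hyperedge_problem V' HI D \<delta> U Or \<longleftrightarrow>
     state_reflection_problem V' HI D (\<lambda>s. if s then \<delta> else U) Or \<and>
     (\<forall>x\<in>D. (\<Sum>v\<in>V'. \<delta> x v) = 0) \<and>
     (\<forall>x\<in>D. \<forall>u\<in>V'. \<forall>v\<in>V'. \<delta> x u \<noteq> 0 \<longrightarrow> \<delta> x v \<noteq> 0 \<longrightarrow> U x u = U x v)"

text \<open>Direct sums: basis of (+)_e H^e is Sigma E HI, that of (+)_e W^e is Sigma E WI;
  (+)_e (H^e (x) W^e) is the block-diagonal subspace of ((+)_e H^e) (x) ((+)_e W^e),
  on which ((+)_e Or^e) (x) I acts as (+)_e (Or^e (x) I).\<close>
definition dsum_op :: "('e \<Rightarrow> 'x \<Rightarrow> 'h \<Rightarrow> 'h \<Rightarrow> complex) \<Rightarrow> 'x \<Rightarrow> 'e \<times> 'h \<Rightarrow> 'e \<times> 'h \<Rightarrow> complex" where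
  "dsum_op Or x = (\<lambda>(e, i) (e', k). if e = e' then Or e x i k else 0)"

definition dsum_vec :: "('e \<Rightarrow> bool \<Rightarrow> 'x \<Rightarrow> 'h \<times> 'w \<Rightarrow> complex) \<Rightarrow> bool \<Rightarrow> 'x \<Rightarrow> ('e \<times> 'h) \<times> ('e \<times> 'w) \<Rightarrow> complex" where
  "dsum_vec w s x = (\<lambda>((e, i), (e', a)). if e = e' then w e s x (i, a) else 0)"

end

theory Submission
  imports Defs
begin

lemma sum_single_block:
  assumes "finite E" "\<forall>e\<in>E. finite (A e)" "e \<in> E"
    and "\<And>e2 k. e2 \<noteq> e \<Longrightarrow> F (e2, k) = 0"
  shows "(\<Sum>p\<in>Sigma E A. F p) = (\<Sum>k\<in>A e. F (e, k))"
proof -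
  have "(\<Sum>p\<in>Sigma E A. F p) = (\<Sum>e2\<in>E. \<Sum>k\<in>A e2. F (e2, k))"
    using assms by (simp add: sum.Sigma)
  also have "\<dots> = (\<Sum>e2\<in>E. if e2 = e then (\<Sum>k\<in>A e. F (e, k)) else 0)"
    by (rule sum.cong) (auto simp: assms(4))
  also have "\<dots> = (\<Sum>k\<in>A e. F (e, k))" using assms by simp
  finally show ?thesis .
qed

lemma sum_diag:
  fixes E :: "'a set" and A :: "'a \<Rightarrow> 'b set" and B :: "'a \<Rightarrow> 'c set" and f :: "('a \<times> 'b) \<times> ('a \<times> 'c) \<Rightarrow> 'd::comm_monoid_add"
  assumes "finite E" "\<forall>e\<in>E. finite (A e)" "\<forall>e\<in>E. finite (B e)"
    and "\<And>e i e' a. e \<noteq> e' \<Longrightarrow> f ((e, i), (e', a)) = 0"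
  shows "(\<Sum>p\<in>Sigma E A \<times> Sigma E B. f p) = (\<Sum>e\<in>E. \<Sum>q\<in>A e \<times> B e. f ((e, fst q), (e, snd q)))"
proof -
  define g :: "'a \<times> 'b \<times> 'c \<Rightarrow> ('a \<times> 'b) \<times> ('a \<times> 'c)" where "g = (\<lambda>(e, q). ((e, fst q), (e, snd q)))"
  have fin: "finite (Sigma E A \<times> Sigma E B)" using assms by auto
  have sub: "g ` Sigma E (\<lambda>e. A e \<times> B e) \<subseteq> Sigma E A \<times> Sigma E B"
    by (auto simp: g_def)
  have "(\<Sum>p\<in>Sigma E A \<times> Sigma E B. f p) = (\<Sum>p\<in>g ` Sigma E (\<lambda>e. A e \<times> B e). f p)"
  proof (rule sum.mono_neutral_right[OF fin sub])
    show "\<forall>i\<in>Sigma E A \<times> Sigma E B - g ` Sigma E (\<lambda>e. A e \<times> B e). f i = 0"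
    proof
      fix p assume p: "p \<in> Sigma E A \<times> Sigma E B - g ` Sigma E (\<lambda>e. A e \<times> B e)"
      obtain e i e' a where pe: "p = ((e, i), (e', a))" by (metis prod.collapse)
      have "e \<noteq> e'"
      proof
        assume "e = e'"
        then have "p = g (e, (i, a))" "(e, (i, a)) \<in> Sigma E (\<lambda>e. A e \<times> B e)"
          using p pe by (auto simp: g_def)
        then show False using p by blast
      qed
      then show "f p = 0" using pe assms(4) by simp
    qed
  qed
  also have "\<dots> = (\<Sum>r\<in>Sigma E (\<lambda>e. A e \<times> B e). f (g r))"
    by (rule sum.reindex_cong[where l=g]) (auto simp: g_def inj_on_def)
  also have "\<dots> = (\<Sum>e\<in>E. \<Sum>q\<in>A e \<times> B e. f (g (e, q)))"
    using assms by (subst sum.Sigma) auto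
  also have "\<dots> = (\<Sum>e\<in>E. \<Sum>q\<in>A e \<times> B e. f ((e, fst q), (e, snd q)))"
    by (simp add: g_def)
  finally show ?thesis .
qed

lemma swap_edges:
  assumes "finite V" "finite E" "\<forall>e\<in>E. N e \<subseteq> V"
  shows "(\<Sum>v\<in>V. \<Sum>e\<in>{e\<in>E. v \<in> N e}. h e v) = (\<Sum>e\<in>E. \<Sum>v\<in>N e. h e v)"
proof -
  have "(\<Sum>v\<in>V. \<Sum>e\<in>{e\<in>E. v \<in> N e}. h e v) = (\<Sum>v\<in>V. \<Sum>e\<in>E. if v \<in> N e then h e v else 0)"
    using assms by (simp add: sum.inter_filter)
  also have "\<dots> = (\<Sum>e\<in>E. \<Sum>v\<in>V. if v \<in> N e then h e v else 0)"
    by (rule sum.swap)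
  also have "\<dots> = (\<Sum>e\<in>E. \<Sum>v\<in>N e. h e v)"
  proof (rule sum.cong)
    fix e assume "e \<in> E"
    then have "N e \<subseteq> V" using assms by auto
    then have "{v \<in> V. v \<in> N e} = N e" by auto
    then show "(\<Sum>v\<in>V. if v \<in> N e then h e v else 0) = (\<Sum>v\<in>N e. h e v)"
      using assms(1) by (simp add: sum.inter_filter[symmetric])
  qed simp
  finally show ?thesis .
qed

theorem theorem5p7:
  fixes V :: "'v set" and E :: "'e set" and N :: "'e \<Rightarrow> 'v set" and B :: "'v set"
    and D :: "'x set"
    and \<delta>e :: "'e \<Rightarrow> 'x \<Rightarrow> 'v \<Rightarrow> complex" and Ue :: "'e \<Rightarrow> 'x \<Rightarrow> 'v \<Rightarrow> complex"
    and HI :: "'e \<Rightarrow> 'h set" and Or :: "'e \<Rightarrow> 'x \<Rightarrow> 'h \<Rightarrow> 'h \<Rightarrow> complex"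
    and WI :: "'e \<Rightarrow> 'w set" and w :: "'e \<Rightarrow> bool \<Rightarrow> 'x \<Rightarrow> 'h \<times> 'w \<Rightarrow> complex"
    and U :: "'x \<Rightarrow> 'v \<Rightarrow> complex"
    and \<delta> :: "'x \<Rightarrow> 'v \<Rightarrow> complex"
  assumes finV: "finite V" and finE: "finite E" and NV: "\<forall>e\<in>E. N e \<subseteq> V" and BV: "B \<subseteq> V" and "finite D"
    and he: "\<forall>e\<in>E. hyperedge_problem (N e) (HI e) D (\<delta>e e) (Ue e) (Or e)"
    and \<delta>def: "\<delta> = (\<lambda>x v. \<Sum>e\<in>{e\<in>E. v \<in> N e}. \<delta>e e x v)"
    and \<delta>0: "\<forall>v\<in>V - B. \<forall>x\<in>D. \<delta> x v = 0"
    and UU: "\<forall>e\<in>E. \<forall>x\<in>D. \<forall>v\<in>N e. Ue e x v = U x v"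
    and fs: "\<forall>e\<in>E. feasible_solution (N e) (HI e) D (\<lambda>s. if s then \<delta>e e else Ue e) (Or e) (WI e) (w e)"
  shows "state_reflection_problem B (Sigma E HI) D (\<lambda>s. if s then \<delta> else U) (dsum_op Or)
       \<and> feasible_solution B (Sigma E HI) D (\<lambda>s. if s then \<delta> else U) (dsum_op Or) (Sigma E WI) (dsum_vec w)
       \<and> (\<forall>x\<in>D. \<forall>s. wsize (Sigma E HI) (Sigma E WI) (dsum_vec w s x)
                      = (\<Sum>e\<in>E. wsize (HI e) (WI e) (w e s x)))"
proof -
  have finN: "\<forall>e\<in>E. finite (N e)" and finH: "\<forall>e\<in>E. finite (HI e)"
    and orth: "\<forall>e\<in>E. \<forall>x\<in>D. vinner (N e) (\<delta>e e x) (Ue e x) = 0"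
    and sq: "\<forall>e\<in>E. \<forall>x\<in>D. \<forall>i\<in>HI e. \<forall>k\<in>HI e. (\<Sum>j\<in>HI e. Or e x i j * Or e x j k) = (if i = k then 1 else 0)"
    using he by (auto simp: hyperedge_problem_def state_reflection_problem_def)
  have finW: "\<forall>e\<in>E. finite (WI e)" using fs by (simp add: feasible_solution_def)
  have fe: "\<And>e x y s t. e \<in> E \<Longrightarrow> x \<in> D \<Longrightarrow> y \<in> D \<Longrightarrow>
      vinner (N e) ((if s then \<delta>e e else Ue e) x) ((if t then \<delta>e e else Ue e) y)
        - sg s * sg t * vinner (N e) ((if s then \<delta>e e else Ue e) x) ((if t then \<delta>e e else Ue e) y)
      = vinner (HI e \<times> WI e) (w e s x)
            (\<lambda>p. tensor_id_apply (HI e) (\<lambda>i k. (if i = k then 1 else 0) - adj_mult (HI e) (Or e x) (Or e y) i k) (w e t y) p)"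
    using fs unfolding feasible_solution_def by blast
  have finB: "finite B" using finV BV finite_subset by blast
  have finSH: "finite (Sigma E HI)" using finE finH by auto
  have finSW: "finite (Sigma E WI)" using finE finW by auto
  have B1: "(\<Sum>v\<in>B. cnj (\<delta> x v) * g v) = (\<Sum>e\<in>E. \<Sum>v\<in>N e. cnj (\<delta>e e x v) * g v)" if "x \<in> D" for x g
  proof -
    have "(\<Sum>v\<in>B. cnj (\<delta> x v) * g v) = (\<Sum>v\<in>V. cnj (\<delta> x v) * g v)"
      by (rule sum.mono_neutral_left[OF finV BV]) (use \<delta>0 that in auto)
    also have "\<dots> = (\<Sum>v\<in>V. \<Sum>e\<in>{e\<in>E. v \<in> N e}. cnj (\<delta>e e x v) * g v)"
      by (simp add: \<delta>def sum_distrib_right)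
    also have "\<dots> = (\<Sum>e\<in>E. \<Sum>v\<in>N e. cnj (\<delta>e e x v) * g v)"
      by (rule swap_edges[OF finV finE NV])
    finally show ?thesis .
  qed
  have B2: "(\<Sum>v\<in>B. cnj (g v) * \<delta> x v) = (\<Sum>e\<in>E. \<Sum>v\<in>N e. cnj (g v) * \<delta>e e x v)" if "x \<in> D" for x g
  proof -
    have "(\<Sum>v\<in>B. cnj (g v) * \<delta> x v) = (\<Sum>v\<in>V. cnj (g v) * \<delta> x v)"
      by (rule sum.mono_neutral_left[OF finV BV]) (use \<delta>0 that in auto)
    also have "\<dots> = (\<Sum>v\<in>V. \<Sum>e\<in>{e\<in>E. v \<in> N e}. cnj (g v) * \<delta>e e x v)"
      by (simp add: \<delta>def sum_distrib_left)
    also have "\<dots> = (\<Sum>e\<in>E. \<Sum>v\<in>N e. cnj (g v) * \<delta>e e x v)"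
      by (rule swap_edges[OF finV finE NV])
    finally show ?thesis .
  qed
  have DU: "vinner B (\<delta> x) (U y) = (\<Sum>e\<in>E. vinner (N e) (\<delta>e e x) (Ue e y))" if "x \<in> D" "y \<in> D" for x y
    unfolding vinner_def B1[OF that(1)] using UU that by (intro sum.cong) auto
  have UD: "vinner B (U x) (\<delta> y) = (\<Sum>e\<in>E. vinner (N e) (Ue e x) (\<delta>e e y))" if "x \<in> D" "y \<in> D" for x y
    unfolding vinner_def B2[OF that(2)] using UU that by (intro sum.cong) auto
  have adj: "adj_mult (Sigma E HI) (dsum_op Or x) (dsum_op Or y) (e, i) (e, k) = adj_mult (HI e) (Or e x) (Or e y) i k"
    if "e \<in> E" for e i k x y
  proof -
    have "adj_mult (Sigma E HI) (dsum_op Or x) (dsum_op Or y) (e, i) (e, k)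
       = (\<Sum>p\<in>Sigma E HI. cnj (dsum_op Or x p (e, i)) * dsum_op Or y p (e, k))"
      by (simp add: adj_mult_def)
    also have "\<dots> = (\<Sum>j\<in>HI e. cnj (dsum_op Or x (e, j) (e, i)) * dsum_op Or y (e, j) (e, k))"
      by (rule sum_single_block[OF finE finH that]) (simp add: dsum_op_def)
    also have "\<dots> = adj_mult (HI e) (Or e x) (Or e y) i k"
      by (simp add: adj_mult_def dsum_op_def)
    finally show ?thesis .
  qed
  have tens: "tensor_id_apply (Sigma E HI) (\<lambda>i k. (if i = k then 1 else 0) - adj_mult (Sigma E HI) (dsum_op Or x) (dsum_op Or y) i k) (dsum_vec w t y) ((e, i), (e, a))
     = tensor_id_apply (HI e) (\<lambda>i k. (if i = k then 1 else 0) - adj_mult (HI e) (Or e x) (Or e y) i k) (w e t y) (i, a)"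
    if "e \<in> E" for e i a x y t
  proof -
    have "tensor_id_apply (Sigma E HI) (\<lambda>i k. (if i = k then 1 else 0) - adj_mult (Sigma E HI) (dsum_op Or x) (dsum_op Or y) i k) (dsum_vec w t y) ((e, i), (e, a))
      = (\<Sum>p\<in>Sigma E HI. ((if (e, i) = p then 1 else 0) - adj_mult (Sigma E HI) (dsum_op Or x) (dsum_op Or y) (e, i) p) * dsum_vec w t y (p, (e, a)))"
      by (simp add: tensor_id_apply_def)
    also have "\<dots> = (\<Sum>k\<in>HI e. ((if (e, i) = (e, k) then 1 else 0) - adj_mult (Sigma E HI) (dsum_op Or x) (dsum_op Or y) (e, i) (e, k)) * dsum_vec w t y ((e, k), (e, a)))"
      by (rule sum_single_block[OF finE finH that]) (simp add: dsum_vec_def)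
    also have "\<dots> = tensor_id_apply (HI e) (\<lambda>i k. (if i = k then 1 else 0) - adj_mult (HI e) (Or e x) (Or e y) i k) (w e t y) (i, a)"
      by (simp add: tensor_id_apply_def adj[OF that] dsum_vec_def)
    finally show ?thesis .
  qed
  have RHS: "vinner (Sigma E HI \<times> Sigma E WI) (dsum_vec w s x) (\<lambda>p. tensor_id_apply (Sigma E HI) (\<lambda>i k. (if i = k then 1 else 0) - adj_mult (Sigma E HI) (dsum_op Or x) (dsum_op Or y) i k) (dsum_vec w t y) p)
     = (\<Sum>e\<in>E. vinner (HI e \<times> WI e) (w e s x) (\<lambda>p. tensor_id_apply (HI e) (\<lambda>i k. (if i = k then 1 else 0) - adj_mult (HI e) (Or e x) (Or e y) i k) (w e t y) p))"
    for x y s t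
    unfolding vinner_def
    apply (subst sum_diag[OF finE finH finW])
     apply (simp add: dsum_vec_def)
    apply (rule sum.cong, rule refl)
    apply (rule sum.cong, rule refl)
    apply (auto simp: tens)
    apply (simp add: dsum_vec_def)
    done
  have LHS: "vinner B ((if s then \<delta> else U) x) ((if t then \<delta> else U) y) - sg s * sg t * vinner B ((if s then \<delta> else U) x) ((if t then \<delta> else U) y)
     = (\<Sum>e\<in>E. vinner (N e) ((if s then \<delta>e e else Ue e) x) ((if t then \<delta>e e else Ue e) y)
        - sg s * sg t * vinner (N e) ((if s then \<delta>e e else Ue e) x) ((if t then \<delta>e e else Ue e) y))"
    if "x \<in> D" "y \<in> D" for x y s t
    using that by (cases s; cases t) (simp_all add: sg_def DU UD sum_distrib_left[symmetric])
  have P1: "state_reflection_problem B (Sigma E HI) D (\<lambda>s. if s then \<delta> else U) (dsum_op Or)"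
    unfolding state_reflection_problem_def
  proof (intro conjI ballI)
    show "finite B" "finite (Sigma E HI)" by (fact finB, fact finSH)
  next
    fix x assume x: "x \<in> D"
    show "vinner B ((if True then \<delta> else U) x) ((if False then \<delta> else U) x) = 0"
      using DU[OF x x] orth x by simp
  next
    fix x p q assume x: "x \<in> D" and p: "p \<in> Sigma E HI" and q: "q \<in> Sigma E HI"
    obtain e i where pe: "p = (e, i)" "e \<in> E" "i \<in> HI e" using p by auto
    obtain e' k where qe: "q = (e', k)" "e' \<in> E" "k \<in> HI e'" using q by auto
    have "(\<Sum>r\<in>Sigma E HI. dsum_op Or x p r * dsum_op Or x r q)
        = (\<Sum>j\<in>HI e. dsum_op Or x (e, i) (e, j) * dsum_op Or x (e, j) (e', k))"
      unfolding pe qe by (rule sum_single_block[OF finE finH pe(2)]) (simp add: dsum_op_def)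
    also have "\<dots> = (if p = q then 1 else 0)"
    proof (cases "e = e'")
      case True
      then show ?thesis using sq pe qe x by (simp add: dsum_op_def)
    next
      case False
      then show ?thesis using pe qe by (simp add: dsum_op_def)
    qed
    finally show "(\<Sum>r\<in>Sigma E HI. dsum_op Or x p r * dsum_op Or x r q) = (if p = q then 1 else 0)" .
  qed
  have P2: "feasible_solution B (Sigma E HI) D (\<lambda>s. if s then \<delta> else U) (dsum_op Or) (Sigma E WI) (dsum_vec w)"
    unfolding feasible_solution_def
  proof (intro conjI ballI allI)
    show "finite (Sigma E WI)" by (fact finSW)
  next
    fix x y s t assume x: "x \<in> D" and y: "y \<in> D"
    show "vinner B ((if s then \<delta> else U) x) ((if t then \<delta> else U) y) - sg s * sg t * vinner B ((if s then \<delta> else U) x) ((if t then \<delta> else U) y) =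
          vinner (Sigma E HI \<times> Sigma E WI) (dsum_vec w s x)
           (\<lambda>p. tensor_id_apply (Sigma E HI) (\<lambda>i k. (if i = k then 1 else 0) - adj_mult (Sigma E HI) (dsum_op Or x) (dsum_op Or y) i k) (dsum_vec w t y) p)"
      unfolding LHS[OF x y] RHS using fe x y by (intro sum.cong) auto
  qed
  have P3: "\<forall>x\<in>D. \<forall>s. wsize (Sigma E HI) (Sigma E WI) (dsum_vec w s x) = (\<Sum>e\<in>E. wsize (HI e) (WI e) (w e s x))"
    unfolding wsize_def
    apply (intro ballI allI)
    apply (subst sum_diag[OF finE finH finW])
     apply (simp add: dsum_vec_def)
    apply (rule sum.cong, rule refl)
    apply (rule sum.cong, rule refl)
    apply (auto simp: dsum_vec_def)
    done
  show ?thesis using P1 P2 P3 by blast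
qed

end
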